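(* Let $X=\{X_k\}_{k\in\mathbb Z}$ be a positive strictly stationary time series satisfying Condition 1, and let $m\in\mathbb N$ be fixed. Then for every fixed $k\in\mathbb N$, $D(j,k)/\widetilde D(j,k)\xrightarrow{P}1$ as $j\to\infty$.
   Context: Setup: $\mathbb P\{X_k>x\}\sim c_Xx^{-\alpha}$ as $x\to\infty$, $\alpha>0$, $c_X>0$; $M_n:=\max_{1\le k\le n}X_k$ and $\mathbb P\{M_n\le n^{1/\alpha}x\}=\exp\{-c(n,x)x^{-\alpha}\}$, $x>0$, defines $c(n,x)>0$. Condition 1: there exist $\beta>0$, $R\in\mathbb R$, $\theta\in(0,1]$ and $c_1:(0,\infty)\to[0,\infty)$ with $c_1(x)=\mathcal O(x^{-R})$ as $x\downarrow0$, such that $|c(n,x)-\theta c_X|\le c_1(x)n^{-\beta}$ for all $x>0$ and all $n$. Block maxima: for $2^j>m$, $D(j,k):=\max_{1\le i\le 2^j}X_{2^j(k-1)+i}$ and $\widetilde D(j,k):=\max_{1\le i\le 2^j-m}X_{2^j(k-1)+i}$. *)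

theory Defs
  imports "HOL-Probability.Probability" "HOL-Library.Landau_Symbols"
begin

definition strictly_stationary :: "'a measure \<Rightarrow> (int \<Rightarrow> 'a \<Rightarrow> real) \<Rightarrow> bool" where
  "strictly_stationary M X \<longleftrightarrow>
     (\<forall>I h. finite I \<longrightarrow>
        distr M (Pi\<^sub>M I (\<lambda>_. borel)) (\<lambda>\<omega>. \<lambda>t\<in>I. X (t + h) \<omega>)
      = distr M (Pi\<^sub>M I (\<lambda>_. borel)) (\<lambda>\<omega>. \<lambda>t\<in>I. X t \<omega>))"

definition run_max :: "(int \<Rightarrow> 'a \<Rightarrow> real) \<Rightarrow> nat \<Rightarrow> 'a \<Rightarrow> real" where
  "run_max X n \<omega> = Max ((\<lambda>k. X k \<omega>) ` {1..int n})"

text \<open>c(n,x), defined by P{M_n <= n^(1/alpha) x} = exp(-c(n,x) x^(-alpha)).\<close>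
definition cfun :: "'a measure \<Rightarrow> (int \<Rightarrow> 'a \<Rightarrow> real) \<Rightarrow> real \<Rightarrow> nat \<Rightarrow> real \<Rightarrow> real" where
  "cfun M X \<alpha> n x =
     - ln (measure M {\<omega> \<in> space M. run_max X n \<omega> \<le> real n powr (1 / \<alpha>) * x}) * x powr \<alpha>"

definition condition1 :: "'a measure \<Rightarrow> (int \<Rightarrow> 'a \<Rightarrow> real) \<Rightarrow> real \<Rightarrow> real \<Rightarrow> bool" where
  "condition1 M X \<alpha> cX \<longleftrightarrow>
     (\<exists>\<beta> R \<theta> (c1 :: real \<Rightarrow> real).
        \<beta> > 0 \<and> 0 < \<theta> \<and> \<theta> \<le> 1 \<and>
        (\<forall>x>0. c1 x \<ge> 0) \<and>
        c1 \<in> O[at_right 0](\<lambda>x. x powr (- R)) \<and>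
        (\<forall>n\<ge>1. \<forall>x>0. \<bar>cfun M X \<alpha> n x - \<theta> * cX\<bar> \<le> c1 x * real n powr (- \<beta>)))"

definition blockD :: "(int \<Rightarrow> 'a \<Rightarrow> real) \<Rightarrow> nat \<Rightarrow> nat \<Rightarrow> 'a \<Rightarrow> real" where
  "blockD X j k \<omega> = Max ((\<lambda>i. X (2 ^ j * (int k - 1) + i) \<omega>) ` {1..2 ^ j})"

definition blockDt :: "(int \<Rightarrow> 'a \<Rightarrow> real) \<Rightarrow> nat \<Rightarrow> nat \<Rightarrow> nat \<Rightarrow> 'a \<Rightarrow> real" where
  "blockDt X m j k \<omega> = Max ((\<lambda>i. X (2 ^ j * (int k - 1) + i) \<omega>) ` {1..2 ^ j - int m})"

end

theory Submission
  imports Defs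
begin


lemma stat_pred:
  fixes X :: "int \<Rightarrow> 'a \<Rightarrow> real"
  assumes stat: "strictly_stationary M X" and fin: "finite I"
    and meas: "\<And>t. X t \<in> borel_measurable M"
    and P: "Measurable.pred (PiM I (\<lambda>_. borel)) P"
  shows "measure M {\<omega>\<in>space M. P (\<lambda>t\<in>I. X (t+h) \<omega>)} = measure M {\<omega>\<in>space M. P (\<lambda>t\<in>I. X t \<omega>)}"
proof -
  let ?N = "PiM I (\<lambda>_. borel :: real measure)"
  let ?S = "{g\<in>space ?N. P g}"
  have S: "?S \<in> sets ?N" using P unfolding pred_def .
  have f1: "(\<lambda>\<omega>. \<lambda>t\<in>I. X (t+h) \<omega>) \<in> M \<rightarrow>\<^sub>M ?N"
    by (rule measurable_restrict) (use meas in auto)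
  have f2: "(\<lambda>\<omega>. \<lambda>t\<in>I. X t \<omega>) \<in> M \<rightarrow>\<^sub>M ?N"
    by (rule measurable_restrict) (use meas in auto)
  have "measure (distr M ?N (\<lambda>\<omega>. \<lambda>t\<in>I. X (t+h) \<omega>)) ?S = measure (distr M ?N (\<lambda>\<omega>. \<lambda>t\<in>I. X t \<omega>)) ?S"
    using stat[unfolded strictly_stationary_def, rule_format, OF fin, of h] by (simp only:)
  then have "measure M ((\<lambda>\<omega>. \<lambda>t\<in>I. X (t+h) \<omega>) -` ?S \<inter> space M) = measure M ((\<lambda>\<omega>. \<lambda>t\<in>I. X t \<omega>) -` ?S \<inter> space M)"
    using measure_distr[OF f1 S] measure_distr[OF f2 S] by simp
  moreover have "(\<lambda>\<omega>. \<lambda>t\<in>I. X (t+h) \<omega>) -` ?S \<inter> space M = {\<omega>\<in>space M. P (\<lambda>t\<in>I. X (t+h) \<omega>)}"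
    using measurable_space[OF f1] by auto
  moreover have "(\<lambda>\<omega>. \<lambda>t\<in>I. X t \<omega>) -` ?S \<inter> space M = {\<omega>\<in>space M. P (\<lambda>t\<in>I. X t \<omega>)}"
    using measurable_space[OF f2] by auto
  ultimately show ?thesis by simp
qed

lemma meas_le_set: "(f::'a\<Rightarrow>real) \<in> borel_measurable M \<Longrightarrow> {w\<in>space M. f w \<le> a} \<in> sets M"
  by (simp add: borel_measurable_iff_le)

lemma meas_gt_set: "(f::'a\<Rightarrow>real) \<in> borel_measurable M \<Longrightarrow> {w\<in>space M. a < f w} \<in> sets M"
  by (simp add: borel_measurable_iff_greater)

lemma pred_all_le: "finite I \<Longrightarrow> Measurable.pred (PiM I (\<lambda>_. borel::real measure)) (\<lambda>g. \<forall>t\<in>I. g t \<le> c)"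
  unfolding pred_def by (intro sets.sets_Collect_finite_All meas_le_set measurable_component_singleton) auto

lemma pred_gt0: "Measurable.pred (PiM {0::int} (\<lambda>_. borel::real measure)) (\<lambda>g. c < g 0)"
  unfolding pred_def by (intro meas_gt_set measurable_component_singleton) auto

lemma ratio_pt:
  fixes f :: "int \<Rightarrow> real"
  assumes "1 \<le> n - m'" "m' \<ge> 0" "\<not>(\<forall>i\<in>{1..n-m'}. f i \<le> c)" "\<forall>i\<in>{n-m'+1..n}. f i \<le> c"
  shows "Max (f`{1..n}) = Max (f`{1..n-m'})"
proof -
  let ?A = "Max (f`{1..n-m'})"
  obtain i0 where i0: "i0 \<in> {1..n-m'}" "f i0 > c" using assms(3) by auto
  have "?A \<ge> f i0" using i0 by (intro Max_ge) auto
  hence Ac: "?A > c" using i0 by linarith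
  have le: "Max (f`{1..n}) \<le> ?A"
  proof (subst Max_le_iff)
    show "\<forall>a\<in>f ` {1..n}. a \<le> ?A"
    proof
      fix a assume "a \<in> f ` {1..n}"
      then obtain i where i: "i \<in> {1..n}" "a = f i" by auto
      show "a \<le> ?A"
      proof (cases "i \<le> n - m'")
        case True thus ?thesis using i by (intro Max_ge) auto
      next
        case False
        hence "i \<in> {n-m'+1..n}" using i by auto
        hence "f i \<le> c" using assms(4) by blast
        thus ?thesis using i Ac by linarith
      qed
    qed
  qed (use assms in auto)
  have "?A \<le> Max (f`{1..n})" using assms by (intro Max_mono) auto
  with le show ?thesis by simp
qed

theorem mainTheorem8:
  fixes M :: "'a measure" and X :: "int \<Rightarrow> 'a \<Rightarrow> real"
    and \<alpha> cX :: real and m k :: nat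
  assumes "prob_space M"
    and meas: "\<And>t. X t \<in> borel_measurable M"
    and pos: "\<And>t \<omega>. \<omega> \<in> space M \<Longrightarrow> X t \<omega> > 0"
    and stat: "strictly_stationary M X"
    and \<alpha>: "\<alpha> > 0" and cX: "cX > 0"
    and tail: "\<And>t. (\<lambda>x. measure M {\<omega> \<in> space M. X t \<omega> > x}) \<sim>[at_top] (\<lambda>x. cX * x powr (- \<alpha>))"
    and cdef: "\<And>n x. n \<ge> 1 \<Longrightarrow> x > 0 \<Longrightarrow>
       0 < measure M {\<omega> \<in> space M. run_max X n \<omega> \<le> real n powr (1 / \<alpha>) * x} \<and>
       measure M {\<omega> \<in> space M. run_max X n \<omega> \<le> real n powr (1 / \<alpha>) * x} < 1"
    and cond1: "condition1 M X \<alpha> cX"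
    and k: "k \<ge> 1"
  shows "\<forall>\<epsilon>>0. (\<lambda>j. measure M {\<omega> \<in> space M. \<bar>blockD X j k \<omega> / blockDt X m j k \<omega> - 1\<bar> > \<epsilon>})
           \<longlonglongrightarrow> 0"
proof (intro allI impI)
  fix \<epsilon> :: real assume "\<epsilon> > 0"
  interpret prob_space M by fact
  obtain \<beta> R \<theta> c1 where \<beta>: "\<beta>>0" and \<theta>: "0<\<theta>" "\<theta>\<le>1"
     and bnd: "\<forall>n\<ge>1. \<forall>x>0. \<bar>cfun M X \<alpha> n x - \<theta>*cX\<bar> \<le> c1 x * real n powr (-\<beta>)"
    using cond1 unfolding condition1_def by blast
  let ?E = "\<lambda>j. {\<omega>\<in>space M. \<bar>blockD X j k \<omega> / blockDt X m j k \<omega> - 1\<bar> > \<epsilon>}"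
  show "(\<lambda>j. measure M (?E j)) \<longlonglongrightarrow> 0"
  proof (rule LIMSEQ_I)
    fix r :: real assume r: "r > 0"
    define a where "a = \<theta>*cX/2"
    have a: "a > 0" using \<theta> cX unfolding a_def by simp
    define y where "y = (4/(a*r)) powr (-1/\<alpha>)"
    have y: "y > 0" unfolding y_def using a r by simp
    have ypow: "y powr (-\<alpha>) = 4/(a*r)"
      unfolding y_def using a r \<alpha> by (simp add: powr_powr)
    have expbnd: "exp (-(a * y powr (-\<alpha>))) < r/2"
    proof -
      have "exp (4/r) \<ge> 1 + 4/r" by (rule exp_ge_add_one_self)
      hence "exp (4/r) > 4/r" by linarith
      hence "1/exp (4/r) < 1/(4/r)" using r by (intro divide_strict_left_mono) auto
      moreover have "exp (-(a * y powr (-\<alpha>))) = 1/exp (4/r)"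
        using ypow a by (simp add: exp_minus field_simps)
      ultimately show ?thesis using r by simp
    qed
    have "(\<lambda>N. c1 y * real N powr (-\<beta>)) \<longlonglongrightarrow> 0"
      using \<beta> by (intro tendsto_mult_right_zero tendsto_neg_powr filterlim_real_sequentially) auto
    hence "eventually (\<lambda>N. c1 y * real N powr (-\<beta>) < a) sequentially"
      using a by (rule order_tendstoD)
    then obtain N1 where N1: "\<And>N. N \<ge> N1 \<Longrightarrow> c1 y * real N powr (-\<beta>) < a"
      unfolding eventually_sequentially by blast
    have partA: "measure M {\<omega>\<in>space M. run_max X N \<omega> \<le> real N powr (1/\<alpha>) * y} < r/2"
      if N: "N \<ge> N1" "N \<ge> 1" for N
    proof -
      define p where "p = measure M {\<omega>\<in>space M. run_max X N \<omega> \<le> real N powr (1/\<alpha>) * y}"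
      have p: "0 < p" using cdef[OF N(2) y] unfolding p_def by simp
      have "\<bar>cfun M X \<alpha> N y - \<theta>*cX\<bar> \<le> c1 y * real N powr (-\<beta>)" using bnd N y by simp
      with N1[OF N(1)] have "cfun M X \<alpha> N y \<ge> a" unfolding a_def by linarith
      hence "- ln p * y powr \<alpha> \<ge> a" unfolding cfun_def p_def by simp
      hence "- ln p * y powr \<alpha> * y powr (-\<alpha>) \<ge> a * y powr (-\<alpha>)"
        by (intro mult_right_mono) auto
      moreover have "y powr \<alpha> * y powr (-\<alpha>) = 1" using y by (simp add: powr_add[symmetric])
      ultimately have "ln p \<le> -(a * y powr (-\<alpha>))" by (simp add: mult.assoc)
      hence "exp (ln p) \<le> exp (-(a * y powr (-\<alpha>)))" by simp
      hence "p \<le> exp (-(a * y powr (-\<alpha>)))" using p by simp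
      with expbnd show ?thesis unfolding p_def by simp
    qed
    define r' where "r' = r / (2 * (real m + 1))"
    have r': "r' > 0" unfolding r'_def using r by simp
    have "((\<lambda>x. cX * x powr (-\<alpha>)) \<longlongrightarrow> 0) at_top"
      using \<alpha> by (intro tendsto_mult_right_zero tendsto_neg_powr filterlim_ident) auto
    hence "((\<lambda>x. measure M {\<omega> \<in> space M. X 0 \<omega> > x}) \<longlongrightarrow> 0) at_top"
      using asymp_equiv_tendsto_transfer asymp_equiv_sym tail by blast
    hence "eventually (\<lambda>x. measure M {\<omega> \<in> space M. X 0 \<omega> > x} < r') at_top"
      using r' by (rule order_tendstoD)
    then obtain x0 where x0: "\<And>x. x \<ge> x0 \<Longrightarrow> measure M {\<omega> \<in> space M. X 0 \<omega> > x} < r'"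
      unfolding eventually_at_top_linorder by blast
    define x1 where "x1 = max x0 1"
    define N2 where "N2 = nat \<lceil>(x1/y) powr \<alpha>\<rceil>"
    have partB: "real N powr (1/\<alpha>) * y \<ge> x0" if N: "N \<ge> N2" for N
    proof -
      have x1: "x1 > 0" "x1 \<ge> x0" unfolding x1_def by auto
      have "real N \<ge> (x1/y) powr \<alpha>" using N unfolding N2_def by linarith
      hence "real N powr (1/\<alpha>) \<ge> ((x1/y) powr \<alpha>) powr (1/\<alpha>)"
        using \<alpha> by (intro powr_mono2) auto
      also have "((x1/y) powr \<alpha>) powr (1/\<alpha>) = x1/y" using \<alpha> x1 y by (simp add: powr_powr)
      finally have "real N powr (1/\<alpha>) * y \<ge> x1" using y by (simp add: field_simps)
      thus ?thesis using x1 by linarith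
    qed
    define J where "J = N1 + N2 + m + 1"
    show "\<exists>no. \<forall>j\<ge>no. norm (measure M (?E j) - 0) < r"
    proof (intro exI allI impI)
      fix j assume j: "j \<ge> J"
      define N where "N = (2::nat)^j - m"
      have "j < 2^j" by (rule less_exp)
      hence jj: "N1 + N2 + m + 1 < (2::nat)^j" using j unfolding J_def by linarith
      hence NN: "N \<ge> N1" "N \<ge> N2" "N \<ge> 1" unfolding N_def by arith+
      have "int N = 2^j - int m" unfolding N_def using jj by (simp add: of_nat_diff)
      hence twoj: "(2::int)^j = int N + int m" by simp
      define h where "h = (2::int)^j*(int k - 1)"
      define c where "c = real N powr (1/\<alpha>) * y"
      have c0: "c \<ge> 0" unfolding c_def using y by simp
      define A where "A = {\<omega>\<in>space M. \<forall>i\<in>{1..int N}. X (i+h) \<omega> \<le> c}"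
      define B where "B = (\<lambda>i. {\<omega>\<in>space M. X (i+h) \<omega> > c})"
      have Ameas: "A \<in> sets M" unfolding A_def using meas by (intro sets.sets_Collect_finite_All meas_le_set) auto
      have Bmeas: "B i \<in> sets M" for i unfolding B_def by (intro meas_gt_set meas)
      have sub: "?E j \<subseteq> A \<union> (\<Union>i\<in>{int N+1..int N + int m}. B i)"
      proof
        fix \<omega> assume \<omega>: "\<omega> \<in> ?E j"
        show "\<omega> \<in> A \<union> (\<Union>i\<in>{int N+1..int N + int m}. B i)"
        proof (rule ccontr)
          assume nin: "\<omega> \<notin> A \<union> (\<Union>i\<in>{int N+1..int N + int m}. B i)"
          have sp: "\<omega> \<in> space M" using \<omega> by simp
          let ?f = "\<lambda>i. X (h + i) \<omega>"
          have eq: "Max (?f`{1..2^j}) = Max (?f`{1..2^j - int m})"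
          proof (rule ratio_pt[where c=c])
            show "1 \<le> 2^j - int m" using twoj NN by simp
            show "\<not>(\<forall>i\<in>{1..2^j - int m}. ?f i \<le> c)"
              using nin sp twoj unfolding A_def by (auto simp: add.commute)
            show "\<forall>i\<in>{2^j - int m+1..2^j}. ?f i \<le> c"
              using nin sp twoj unfolding B_def by (auto simp: add.commute not_less)
          qed simp
          have "Max (?f`{1..2^j - int m}) \<ge> ?f 1"
            using twoj NN by (intro Max_ge) auto
          moreover have "?f 1 > 0" using pos sp by simp
          ultimately have "Max (?f`{1..2^j - int m}) \<noteq> 0" by linarith
          hence "blockD X j k \<omega> / blockDt X m j k \<omega> = 1"
            unfolding blockD_def blockDt_def h_def[symmetric] using eq by simp
          thus False using \<omega> \<open>\<epsilon> > 0\<close> by simp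
        qed
      qed
      have "measure M (?E j) \<le> measure M (A \<union> (\<Union>i\<in>{int N+1..int N + int m}. B i))"
        using sub Ameas Bmeas by (intro finite_measure_mono) auto
      also have "\<dots> \<le> measure M A + measure M (\<Union>i\<in>{int N+1..int N + int m}. B i)"
        using Ameas Bmeas by (intro measure_Un_le) auto
      also have "measure M (\<Union>i\<in>{int N+1..int N + int m}. B i) \<le> (\<Sum>i\<in>{int N+1..int N + int m}. measure M (B i))"
        using Bmeas by (intro finite_measure_subadditive_finite) auto
      also have "\<dots> \<le> (\<Sum>i\<in>{int N+1..int N + int m}. r')"
      proof (rule sum_mono)
        fix i
        have "measure M (B i) = measure M {\<omega>\<in>space M. (\<lambda>g. g 0 > c) (\<lambda>t\<in>{0::int}. X (t + (i+h)) \<omega>)}"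
          unfolding B_def by simp
        also have "\<dots> = measure M {\<omega>\<in>space M. (\<lambda>g. g 0 > c) (\<lambda>t\<in>{0::int}. X t \<omega>)}"
          by (rule stat_pred[OF stat _ meas pred_gt0]) simp
        also have "\<dots> < r'" using x0 partB[OF NN(2)] unfolding c_def by simp
        finally show "measure M (B i) \<le> r'" by simp
      qed
      also have "\<dots> = real m * r'" by simp
      also have "measure M A = measure M {\<omega>\<in>space M. run_max X N \<omega> \<le> c}"
      proof -
        have "measure M A = measure M {\<omega>\<in>space M. (\<lambda>g. \<forall>t\<in>{1..int N}. g t \<le> c) (\<lambda>t\<in>{1..int N}. X (t + h) \<omega>)}"
          unfolding A_def by simp
        also have "\<dots> = measure M {\<omega>\<in>space M. (\<lambda>g. \<forall>t\<in>{1..int N}. g t \<le> c) (\<lambda>t\<in>{1..int N}. X t \<omega>)}"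
          by (rule stat_pred[OF stat _ meas pred_all_le]) simp_all
        also have "\<dots> = measure M {\<omega>\<in>space M. run_max X N \<omega> \<le> c}"
          unfolding run_max_def using NN by (intro arg_cong[where f="measure M"]) (auto simp: Max_le_iff)
        finally show ?thesis .
      qed
      also have "measure M {\<omega>\<in>space M. run_max X N \<omega> \<le> c} < r/2"
        unfolding c_def using partA NN by simp
      finally have "measure M (?E j) < r/2 + real m * r'" by simp
      also have "real m * r' \<le> r/2" unfolding r'_def using r by (simp add: field_simps)
      finally show "norm (measure M (?E j) - 0) < r" by simp
    qed
  qed
qed

end
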